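(* The reductions $\to_w$ and $\to_{w\neg gcv} := \to_{wm}\cup\to_{we}$ of the silly substitution calculus are confluent.
   Context: Terms: $t,u,s ::= x \mid \lambda x.t \mid t\,u \mid t[x\backslash u]$, where $t[x\backslash u]$ is an explicit substitution binding $x$ in $t$; terms up to $\alpha$-renaming; $\mathrm{fv}(t[x\backslash u]) = (\mathrm{fv}(t)\setminus\{x\})\cup \mathrm{fv}(u)$. Values: $v ::= \lambda x.t$. Substitution contexts: $S ::= \langle\cdot\rangle \mid S[x\backslash u]$. Weak contexts: $W ::= \langle\cdot\rangle \mid W\,t \mid t\,W \mid t[x\backslash W] \mid W[x\backslash u]$. $W\langle\langle t\rangle\rangle$ denotes plugging $t$ in $W$ where $W$ does not capture free variables of $t$. Root rules: $S\langle \lambda x.t\rangle u \mapsto_m S\langle t[x\backslash u]\rangle$; $W\langle\langle x\rangle\rangle[x\backslash u] \mapsto_{e} W\langle\langle u\rangle\rangle[x\backslash u]$ ($W$ weak context); $t[x\backslash S\langle v\rangle] \mapsto_{gcv} S\langle t\rangle$ if $x\notin\mathrm{fv}(t)$. $\to_{wm},\to_{we},\to_{wgcv}$ are their closures under weak contexts; $\to_w$ is their union. A relation $\to$ is confluent if whenever $t\to^* u_1$ and $t\to^* u_2$ there is $s$ with $u_1\to^* s$ and $u_2\to^* s$. *)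

theory Defs
  imports Main
begin

text \<open>Terms of the silly substitution calculus, up to alpha-renaming, represented
with de Bruijn indices. Lam t binds index 0 in t; Sub t u stands for t[x\u]
and binds index 0 in t (but not in u).\<close>

datatype trm = Var nat | Lam trm | App trm trm | Sub trm trm

fun lift :: "nat \<Rightarrow> nat \<Rightarrow> trm \<Rightarrow> trm" where
  "lift d c (Var i) = (if i < c then Var i else Var (i + d))"
| "lift d c (Lam t) = Lam (lift d (Suc c) t)"
| "lift d c (App t u) = App (lift d c t) (lift d c u)"
| "lift d c (Sub t u) = Sub (lift d (Suc c) t) (lift d c u)"

text \<open>Removing an unused index c: decrement every index > c.\<close>
fun down :: "nat \<Rightarrow> trm \<Rightarrow> trm" where
  "down c (Var i) = (if i < c then Var i else Var (i - 1))"
| "down c (Lam t) = Lam (down (Suc c) t)"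
| "down c (App t u) = App (down c t) (down c u)"
| "down c (Sub t u) = Sub (down (Suc c) t) (down c u)"

fun free_in :: "nat \<Rightarrow> trm \<Rightarrow> bool" where
  "free_in i (Var j) = (i = j)"
| "free_in i (Lam t) = free_in (Suc i) t"
| "free_in i (App t u) = (free_in i t \<or> free_in i u)"
| "free_in i (Sub t u) = (free_in (Suc i) t \<or> free_in i u)"

text \<open>Substitution contexts S: the list [u1,...,uk] represents
  <.>[x1\u1]...[xk\uk] (u1 innermost).\<close>
definition plugS :: "trm list \<Rightarrow> trm \<Rightarrow> trm" where
  "plugS us t = foldl Sub t us"

datatype wctx = Hole | AppL wctx trm | AppR trm wctx | SubL wctx trm | SubR trm wctx

fun plug :: "wctx \<Rightarrow> trm \<Rightarrow> trm" where
  "plug Hole t = t"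
| "plug (AppL W u) t = App (plug W t) u"
| "plug (AppR u W) t = App u (plug W t)"
| "plug (SubL W u) t = Sub (plug W t) u"
| "plug (SubR u W) t = Sub u (plug W t)"

fun depth :: "wctx \<Rightarrow> nat" where
  "depth Hole = 0"
| "depth (AppL W u) = depth W"
| "depth (AppR u W) = depth W"
| "depth (SubL W u) = Suc (depth W)"
| "depth (SubR u W) = depth W"

inductive root_m :: "trm \<Rightarrow> trm \<Rightarrow> bool" where
  "root_m (App (plugS us (Lam t)) u) (plugS us (Sub t (lift (length us) 0 u)))"

inductive root_e :: "trm \<Rightarrow> trm \<Rightarrow> bool" where
  "root_e (Sub (plug W (Var (depth W))) u) (Sub (plug W (lift (Suc (depth W)) 0 u)) u)"

inductive root_gcv :: "trm \<Rightarrow> trm \<Rightarrow> bool" where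
  "\<not> free_in 0 t \<Longrightarrow>
   root_gcv (Sub t (plugS us (Lam v))) (plugS us (lift (length us) 0 (down 0 t)))"

inductive wclos :: "(trm \<Rightarrow> trm \<Rightarrow> bool) \<Rightarrow> trm \<Rightarrow> trm \<Rightarrow> bool" for R where
  "R t s \<Longrightarrow> wclos R (plug W t) (plug W s)"

definition step_wm :: "trm \<Rightarrow> trm \<Rightarrow> bool" where "step_wm = wclos root_m"
definition step_we :: "trm \<Rightarrow> trm \<Rightarrow> bool" where "step_we = wclos root_e"
definition step_wgcv :: "trm \<Rightarrow> trm \<Rightarrow> bool" where "step_wgcv = wclos root_gcv"

definition step_w :: "trm \<Rightarrow> trm \<Rightarrow> bool" where
  "step_w t s \<longleftrightarrow> step_wm t s \<or> step_we t s \<or> step_wgcv t s"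

definition step_w_nogcv :: "trm \<Rightarrow> trm \<Rightarrow> bool" where
  "step_w_nogcv t s \<longleftrightarrow> step_wm t s \<or> step_we t s"

definition confluent :: "('a \<Rightarrow> 'a \<Rightarrow> bool) \<Rightarrow> bool" where
  "confluent R \<longleftrightarrow> (\<forall>t u1 u2. R\<^sup>*\<^sup>* t u1 \<and> R\<^sup>*\<^sup>* t u2 \<longrightarrow>
      (\<exists>s. R\<^sup>*\<^sup>* u1 s \<and> R\<^sup>*\<^sup>* u2 s))"

end

theory Submission
  imports Defs
begin


fun isSL :: "trm \<Rightarrow> bool" where
  "isSL (Lam s) = True" | "isSL (Sub t u) = isSL t" | "isSL (Var i) = False" | "isSL (App t u) = False"

fun am :: "trm \<Rightarrow> trm \<Rightarrow> trm" where
  "am (Lam s) v = Sub s v"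
| "am (Sub t u) v = Sub (am t (lift 1 0 v)) u"
| "am (Var i) v = App (Var i) v"
| "am (App a b) v = App (App a b) v"

fun gcs :: "trm \<Rightarrow> trm \<Rightarrow> trm" where
  "gcs t (Lam v) = t"
| "gcs t (Sub r u) = Sub (gcs (lift 1 0 t) r) u"
| "gcs t (Var i) = Sub (lift 1 0 t) (Var i)"
| "gcs t (App a b) = Sub (lift 1 0 t) (App a b)"

fun wsub :: "nat \<Rightarrow> trm \<Rightarrow> trm \<Rightarrow> trm" where
  "wsub k u (Var i) = (if i = k then lift (Suc k) 0 u else Var i)"
| "wsub k u (Lam s) = Lam s"
| "wsub k u (App a b) = App (wsub k u a) (wsub k u b)"
| "wsub k u (Sub a b) = Sub (wsub (Suc k) u a) (wsub k u b)"

inductive rep1 :: "nat \<Rightarrow> trm \<Rightarrow> trm \<Rightarrow> trm \<Rightarrow> bool" where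
  r_var: "rep1 k u (Var k) (lift (Suc k) 0 u)"
| r_appL: "rep1 k u a a' \<Longrightarrow> rep1 k u (App a b) (App a' b)"
| r_appR: "rep1 k u b b' \<Longrightarrow> rep1 k u (App a b) (App a b')"
| r_subL: "rep1 (Suc k) u a a' \<Longrightarrow> rep1 k u (Sub a b) (Sub a' b)"
| r_subR: "rep1 k u b b' \<Longrightarrow> rep1 k u (Sub a b) (Sub a b')"

inductive red :: "bool \<Rightarrow> trm \<Rightarrow> trm \<Rightarrow> bool" for g where
  rm: "isSL t \<Longrightarrow> red g (App t u) (am t u)"
| re: "rep1 0 u t t' \<Longrightarrow> red g (Sub t u) (Sub t' u)"
| rgc: "g \<Longrightarrow> isSL r \<Longrightarrow> red g (Sub (lift 1 0 t) r) (gcs t r)"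
| rappL: "red g a a' \<Longrightarrow> red g (App a b) (App a' b)"
| rappR: "red g b b' \<Longrightarrow> red g (App a b) (App a b')"
| rsubL: "red g a a' \<Longrightarrow> red g (Sub a b) (Sub a' b)"
| rsubR: "red g b b' \<Longrightarrow> red g (Sub a b) (Sub a b')"

primrec F :: "bool \<Rightarrow> trm \<Rightarrow> trm" where
  "F g (Var i) = Var i"
| "F g (Lam s) = Lam s"
| "F g (App t u) = (if isSL t then am (F g t) (F g u) else App (F g t) (F g u))"
| "F g (Sub t u) = (if g \<and> isSL u \<and> \<not> free_in 0 t then gcs (down 0 (F g t)) (F g u)
                    else Sub (wsub 0 (F g u) (F g t)) (F g u))"

definition Q :: "bool \<Rightarrow> bool \<Rightarrow> nat \<Rightarrow> trm \<Rightarrow> trm \<Rightarrow> trm \<Rightarrow> bool" where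
  "Q g rp k U = (\<lambda>A B. red g A B \<or> (rp \<and> rep1 k U A B))\<^sup>*\<^sup>*"

section \<open>lift / down / free\<close>

lemma lift_0[simp]: "lift 0 c t = t"
  by (induction t arbitrary: c) auto

lemma lift_lift_same: "c \<le> c' \<Longrightarrow> c' \<le> c + e \<Longrightarrow> lift d c' (lift e c t) = lift (d + e) c t"
  by (induction t arbitrary: c c') auto

lemma lift_comm: "c' \<le> c \<Longrightarrow> lift d (c + e) (lift e c' t) = lift e c' (lift d c t)"
proof (induction t arbitrary: c c')
  case (Lam t) then show ?case using Lam.IH[of "Suc c'" "Suc c"] by simp
next
  case (Sub t1 t2) then show ?case using Sub.IH(1)[of "Suc c'" "Suc c"] by simp
qed auto

lemma lift_lift1[simp]: "lift 1 0 (lift n 0 t) = lift (Suc n) 0 t"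
  using lift_lift_same[of 0 0 n 1 t] by simp

lemma lift_comm0: "lift d (Suc c) (lift 1 0 t) = lift 1 0 (lift d c t)"
  using lift_comm[of 0 c d 1 t] by simp

lemma lift_comm0'[simp]: "lift d (Suc c) (lift (Suc 0) 0 t) = lift (Suc 0) 0 (lift d c t)"
  using lift_comm0 by simp

lemma free_lift: "free_in i (lift d c t) = ((i < c \<and> free_in i t) \<or> (c + d \<le> i \<and> free_in (i - d) t))"
proof (induction t arbitrary: i c)
  case (Var x) then show ?case by auto
next
  case (Lam t) then show ?case by (auto simp: Suc_diff_le)
next
  case (App t1 t2) then show ?case by auto
next
  case (Sub t1 t2) then show ?case by (auto simp: Suc_diff_le)
qed

lemma down_lift[simp]: "down c (lift (Suc 0) c t) = t"
  by (induction t arbitrary: c) auto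

lemma lift_down: "\<not> free_in c t \<Longrightarrow> lift (Suc 0) c (down c t) = t"
  by (induction t arbitrary: c) auto

lemma isSL_lift[simp]: "isSL (lift d c t) = isSL t"
  by (induction t arbitrary: c) auto

lemma isSL_down[simp]: "isSL (down c t) = isSL t"
  by (induction t arbitrary: c) auto

lemma nofree_lift_low: "i < c + d \<Longrightarrow> c \<le> i \<Longrightarrow> \<not> free_in i (lift d c t)"
  by (auto simp: free_lift)

lemma nofree_lift0[simp]: "i < d \<Longrightarrow> \<not> free_in i (lift d 0 t)"
  by (auto simp: free_lift)



lemma lift_am: "lift d c (am t u) = am (lift d c t) (lift d c u)"
  by (induction t u arbitrary: c rule: am.induct) (auto simp: lift_comm0)

lemma lift_gcs: "lift d c (gcs t r) = gcs (lift d c t) (lift d c r)"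
  by (induction t r arbitrary: c rule: gcs.induct) (auto simp: lift_comm0)


lemma isSL_gcs[simp]: "isSL r \<Longrightarrow> isSL (gcs t r) = isSL t"
  by (induction t r rule: gcs.induct) auto

lemma gcs_am: "isSL t \<Longrightarrow> isSL r \<Longrightarrow> gcs (am t v) r = am (gcs t r) v"
  by (induction "am t v" r arbitrary: t v rule: gcs.induct) (auto simp: lift_am)

lemma gcs_assoc: "isSL q \<Longrightarrow> gcs (gcs T t) q = gcs T (gcs t q)"
  by (induction "gcs T t" q arbitrary: T t rule: gcs.induct) (auto simp: lift_gcs)

lemma free_am: "isSL t \<Longrightarrow> free_in i (am t u) = (free_in i t \<or> free_in i u)"
  by (induction t u arbitrary: i rule: am.induct) (auto simp: free_lift)

lemma free_gcs: "free_in i (gcs t r) \<Longrightarrow> free_in i t \<or> free_in i r"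
proof (induction t r arbitrary: i rule: gcs.induct)
  case (2 t r u)
  then show ?case using "2.IH"[of "Suc i"] by (auto simp: free_lift)
qed (auto simp: free_lift)

section \<open>down via lift\<close>

lemma down_eq: "\<not> free_in c t \<Longrightarrow> t = lift (Suc 0) c (down c t)"
  using lift_down by simp

lemma down_am: "\<not> free_in c t \<Longrightarrow> \<not> free_in c u \<Longrightarrow> down c (am t u) = am (down c t) (down c u)"
proof -
  assume a: "\<not> free_in c t" "\<not> free_in c u"
  have "am t u = am (lift (Suc 0) c (down c t)) (lift (Suc 0) c (down c u))"
    using down_eq[OF a(1)] down_eq[OF a(2)] by simp
  also have "\<dots> = lift (Suc 0) c (am (down c t) (down c u))" by (simp add: lift_am)
  finally show ?thesis by simp
qed

lemma down_gcs: "\<not> free_in c t \<Longrightarrow> \<not> free_in c r \<Longrightarrow> down c (gcs t r) = gcs (down c t) (down c r)"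
proof -
  assume a: "\<not> free_in c t" "\<not> free_in c r"
  have "gcs t r = gcs (lift (Suc 0) c (down c t)) (lift (Suc 0) c (down c r))"
    using down_eq[OF a(1)] down_eq[OF a(2)] by simp
  also have "\<dots> = lift (Suc 0) c (gcs (down c t) (down c r))" by (simp add: lift_gcs)
  finally show ?thesis by simp
qed

lemma down_lift0: "\<not> free_in c t \<Longrightarrow> down (Suc c) (lift (Suc 0) 0 t) = lift (Suc 0) 0 (down c t)"
proof -
  assume a: "\<not> free_in c t"
  have "lift (Suc 0) 0 t = lift (Suc 0) (Suc c) (lift (Suc 0) 0 (down c t))"
    using down_eq[OF a] lift_comm0'[of "Suc 0" c "down c t"] by metis
  then show ?thesis by (metis down_lift)
qed

lemma down_liftk: "\<not> free_in c t \<Longrightarrow> down (Suc (k + c)) (lift (Suc k) 0 t) = lift (Suc k) 0 (down c t)"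
proof -
  assume a: "\<not> free_in c t"
  have "lift (Suc k) 0 t = lift 1 (Suc (k + c)) (lift (Suc k) 0 (down c t))"
    using down_eq[OF a] lift_comm[of 0 c 1 "Suc k" "down c t"] by (simp add: add.commute)
  then show ?thesis by simp
qed

lemma down_lift_big: "c \<le> j \<Longrightarrow> down c (lift (Suc j) 0 U) = lift j 0 U"
proof -
  assume "c \<le> j"
  then have "lift (Suc j) 0 U = lift 1 c (lift j 0 U)"
    using lift_lift_same[of 0 c j 1 U] by simp
  then show ?thesis by simp
qed

lemma free_down: "\<not> free_in c t \<Longrightarrow> free_in i (down c t) \<Longrightarrow> free_in (if i < c then i else Suc i) t"
proof -
  assume a: "\<not> free_in c t" "free_in i (down c t)"
  have "free_in (if i < c then i else Suc i) (lift 1 c (down c t))"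
    using a(2) by (auto simp: free_lift)
  then show ?thesis using down_eq[OF a(1)] by simp
qed

lemma wsub_nofree: "\<not> free_in k t \<Longrightarrow> wsub k u t = t"
  by (induction k u t rule: wsub.induct) auto

lemma wsub_idem[simp]: "wsub k u (wsub k u t) = wsub k u t"
  by (induction k u t rule: wsub.induct) (auto simp: wsub_nofree)

lemma lift_wsub1: "c \<le> k \<Longrightarrow> lift d c (wsub k u t) = wsub (k + d) u (lift d c t)"
proof (induction k u t arbitrary: c rule: wsub.induct)
  case (1 k u i)
  then show ?case using lift_lift_same[of 0 c "Suc k" d u] by (auto simp: add.commute)
qed auto

lemma lift_wsub2: "k < c \<Longrightarrow> lift d c (wsub k u t) = wsub k (lift d (c - Suc k) u) (lift d c t)"
proof (induction k u t arbitrary: c rule: wsub.induct)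
  case (1 k u i)
  then show ?case using lift_comm[of 0 "c - Suc k" d "Suc k" u] by auto
qed auto

lemma lift1_wsub[simp]: "lift (Suc 0) 0 (wsub k u t) = wsub (Suc k) u (lift (Suc 0) 0 t)"
  using lift_wsub1[of 0 k "Suc 0" u t] by simp

lemma isSL_wsub[simp]: "isSL t \<Longrightarrow> isSL (wsub k u t)"
  by (induction k u t rule: wsub.induct) auto

lemma wsub_am_t: "isSL t \<Longrightarrow> wsub k u (am (wsub k u t) v) = wsub k u (am t v)"
  by (induction t v arbitrary: k rule: am.induct) auto

lemma wsub_am_v: "isSL t \<Longrightarrow> wsub k u (am t (wsub k u v)) = wsub k u (am t v)"
  by (induction t v arbitrary: k rule: am.induct) (auto simp: lift1_wsub)

lemma wsub_am: "isSL t \<Longrightarrow> wsub k u (am (wsub k u t) (wsub k u v)) = wsub k u (am t v)"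
  by (simp add: wsub_am_t wsub_am_v)

lemma wsub_gcs: "isSL r \<Longrightarrow> wsub k u (gcs t r) = gcs (wsub k u t) (wsub k u r)"
  by (induction t r arbitrary: k rule: gcs.induct) (auto simp: lift1_wsub)

lemma free_wsub: "free_in n (wsub k u t) \<Longrightarrow> free_in n t \<or> (k < n \<and> free_in (n - Suc k) u)"
proof (induction k u t arbitrary: n rule: wsub.induct)
  case (4 k u a b)
  then show ?case using "4.IH"(1)[of "Suc n"] by auto
qed (auto simp: free_lift split: if_splits)



lemma rep1_lift_high: "rep1 k u t t' \<Longrightarrow> rep1 k (lift d c u) (lift d (Suc (k + c)) t) (lift d (Suc (k + c)) t')"
proof (induction rule: rep1.induct)
  case (r_var k u)
  have "lift d (Suc (k + c)) (lift (Suc k) 0 u) = lift (Suc k) 0 (lift d c u)"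
    using lift_comm[of 0 c d "Suc k" u] by (simp add: add.commute)
  then show ?case using rep1.r_var[of k "lift d c u"] by simp
qed (auto intro: rep1.intros)

lemma rep1_lift_low: "rep1 k U t t' \<Longrightarrow> c \<le> k \<Longrightarrow> rep1 (k + n) U (lift n c t) (lift n c t')"
proof (induction arbitrary: c rule: rep1.induct)
  case (r_var k u)
  have "lift n c (lift (Suc k) 0 u) = lift (Suc (k + n)) 0 u"
    using lift_lift_same[of 0 c "Suc k" n u] r_var by (simp add: add.commute)
  then show ?case using rep1.r_var[of "k + n" u] r_var by simp
next
  case (r_subL k u a a' b)
  then show ?case using rep1.r_subL by fastforce
qed (auto intro: rep1.intros)

lemma rep1_isSL: "rep1 k u t t' \<Longrightarrow> isSL t \<Longrightarrow> isSL t'"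
  by (induction rule: rep1.induct) auto

lemma rep1_free_k: "rep1 k u t t' \<Longrightarrow> free_in k t"
  by (induction rule: rep1.induct) auto

lemma free_rep1: "rep1 k u t t' \<Longrightarrow> free_in n t' \<Longrightarrow> free_in n t \<or> (k < n \<and> free_in (n - Suc k) u)"
proof (induction arbitrary: n rule: rep1.induct)
  case (r_subL k u a a' b)
  then show ?case using r_subL.IH[of "Suc n"] by auto
qed (auto simp: free_lift)

lemma free_rep1_back: "rep1 k u t t' \<Longrightarrow> n \<noteq> k \<Longrightarrow> free_in n t \<Longrightarrow> free_in n t'"
  by (induction arbitrary: n rule: rep1.induct) auto

lemma rep1_wsub_same: "rep1 k u t t' \<Longrightarrow> wsub k u t' = wsub k u t"
  by (induction rule: rep1.induct) (auto simp: wsub_nofree)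

lemma wsub_rep1: "rep1 j U X X' \<Longrightarrow> i < j \<Longrightarrow> rep1 j U (wsub i V X) (wsub i V X')"
proof (induction arbitrary: i rule: rep1.induct)
  case (r_var k u)
  then show ?case using rep1.r_var[of k u] by (simp add: wsub_nofree)
qed (auto intro: rep1.intros)

lemma rep1_star_appL: "(rep1 k u)\<^sup>*\<^sup>* a a' \<Longrightarrow> (rep1 k u)\<^sup>*\<^sup>* (App a b) (App a' b)"
  by (induction rule: rtranclp_induct) (auto intro: rep1.intros rtranclp.rtrancl_into_rtrancl)
lemma rep1_star_appR: "(rep1 k u)\<^sup>*\<^sup>* b b' \<Longrightarrow> (rep1 k u)\<^sup>*\<^sup>* (App a b) (App a b')"
  by (induction rule: rtranclp_induct) (auto intro: rep1.intros rtranclp.rtrancl_into_rtrancl)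
lemma rep1_star_subL: "(rep1 (Suc k) u)\<^sup>*\<^sup>* a a' \<Longrightarrow> (rep1 k u)\<^sup>*\<^sup>* (Sub a b) (Sub a' b)"
  by (induction rule: rtranclp_induct) (auto intro: rep1.intros rtranclp.rtrancl_into_rtrancl)
lemma rep1_star_subR: "(rep1 k u)\<^sup>*\<^sup>* b b' \<Longrightarrow> (rep1 k u)\<^sup>*\<^sup>* (Sub a b) (Sub a b')"
  by (induction rule: rtranclp_induct) (auto intro: rep1.intros rtranclp.rtrancl_into_rtrancl)

lemma fill: "(rep1 k u)\<^sup>*\<^sup>* t (wsub k u t)"
proof (induction t arbitrary: k)
  case (Var x)
  then show ?case by (auto intro: rep1.intros)
next
  case (App t1 t2)
  then show ?case
    by (metis (no_types, lifting) rep1_star_appL rep1_star_appR rtranclp_trans wsub.simps(3))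
next
  case (Sub t1 t2)
  then show ?case
    by (metis (no_types, lifting) rep1_star_subL rep1_star_subR rtranclp_trans wsub.simps(4))
qed auto

lemma rep1_down: "rep1 j U X X' \<Longrightarrow> c < j \<Longrightarrow> \<not> free_in c X \<Longrightarrow> rep1 (j - 1) U (down c X) (down c X')"
proof (induction arbitrary: c rule: rep1.induct)
  case (r_var k u)
  then have "down c (lift (Suc k) 0 u) = lift k 0 u" by (simp add: down_lift_big)
  moreover have "rep1 (k - 1) u (Var (k - 1)) (lift (Suc (k - 1)) 0 u)" by (rule rep1.r_var)
  ultimately show ?case using r_var by simp
next
  case (r_subL k u a a' b)
  then have "rep1 k u (down (Suc c) a) (down (Suc c) a')" by fastforce
  then have "rep1 (Suc (k - 1)) u (down (Suc c) a) (down (Suc c) a')" using r_subL by simp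
  then show ?case by (simp add: rep1.r_subL)
qed (auto intro: rep1.intros)

lemma rep1_down2: "rep1 k u t t' \<Longrightarrow> \<not> free_in (Suc (k + c)) t \<Longrightarrow> \<not> free_in c u
   \<Longrightarrow> rep1 k (down c u) (down (Suc (k + c)) t) (down (Suc (k + c)) t')"
proof (induction rule: rep1.induct)
  case (r_var k u)
  then show ?case using rep1.r_var[of k "down c u"] by (simp add: down_liftk)
qed (auto intro: rep1.intros)

lemma am_rep1: "rep1 k U X X' \<Longrightarrow> isSL X \<Longrightarrow> rep1 k U (am X V) (am X' V)"
proof (induction arbitrary: V rule: rep1.induct)
  case (r_subL k u a a' b)
  then show ?case using rep1_isSL by (auto intro: rep1.intros)
next
  case (r_subR k u b b' a)
  then show ?case by (auto intro: rep1.intros)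
qed auto

lemma gcs_rep1: "rep1 k U X X' \<Longrightarrow> isSL X \<Longrightarrow> rep1 k U (gcs T X) (gcs T X')"
proof (induction arbitrary: T rule: rep1.induct)
  case (r_subL k u a a' b)
  then show ?case using rep1_isSL by (auto intro: rep1.intros)
next
  case (r_subR k u b b' a)
  then show ?case by (auto intro: rep1.intros)
qed auto

lemma E_rep1: "rep1 j w a a' \<Longrightarrow> \<exists>a''. rep1 j (wsub k u w) (wsub (Suc (k + j)) u a) a''
     \<and> wsub (Suc (k + j)) u a'' = wsub (Suc (k + j)) u a'"
proof (induction rule: rep1.induct)
  case (r_var j w)
  have e1: "wsub (Suc (k + j)) u (lift (Suc j) 0 w) = lift (Suc j) 0 (wsub k u w)"
    using lift_wsub1[of 0 k "Suc j" u w] by (simp add: add.commute)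
  have e2: "wsub (Suc (k + j)) u (lift (Suc j) 0 (wsub k u w)) = lift (Suc j) 0 (wsub k u w)"
    using lift_wsub1[of 0 k "Suc j" u "wsub k u w"] by (simp add: add.commute)
  show ?case
    by (rule exI[of _ "lift (Suc j) 0 (wsub k u w)"]) (simp add: e1 e2 rep1.r_var)
next
  case (r_appL k u a a' b)
  then show ?case by (auto intro: rep1.intros)
next
  case (r_appR k u b b' a)
  then show ?case by (auto intro: rep1.intros)
next
  case (r_subL k u a a' b)
  then show ?case by (auto intro: rep1.intros)
next
  case (r_subR k u b b' a)
  then show ?case by (auto intro: rep1.intros)
qed



lemma rgc': "g \<Longrightarrow> isSL r \<Longrightarrow> red g (Sub (lift (Suc 0) 0 t) r) (gcs t r)"
  using rgc by simp

lemma red_lift: "red g t t' \<Longrightarrow> red g (lift d c t) (lift d c t')"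
proof (induction arbitrary: c rule: red.induct)
  case (rm t u)
  then show ?case by (simp add: lift_am red.rm)
next
  case (re u t t')
  then show ?case using rep1_lift_high[OF re, of d c] by (simp add: red.re)
next
  case (rgc r t)
  then show ?case using rgc'[of g "lift d c r" "lift d c t"] by (simp add: lift_gcs)
qed (auto intro: red.intros)

lemma red_isSL: "red g t t' \<Longrightarrow> isSL t \<Longrightarrow> isSL t'"
  by (induction rule: red.induct) (auto simp: rep1_isSL)

lemma free_red: "red g t t' \<Longrightarrow> free_in n t' \<Longrightarrow> free_in n t"
proof (induction arbitrary: n rule: red.induct)
  case (rm t u)
  then show ?case by (simp add: free_am)
next
  case (re u t t')
  then show ?case using free_rep1[OF re.hyps, of "Suc n"] by auto
next
  case (rgc r t)
  then show ?case using free_gcs[of n t r] by (auto simp: free_lift)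
next
  case (rsubL a a' b)
  then show ?case by auto
qed auto

lemma red_down: "red g A B \<Longrightarrow> \<not> free_in c A \<Longrightarrow> red g (down c A) (down c B)"
proof (induction arbitrary: c rule: red.induct)
  case (rm t u)
  then show ?case by (simp add: down_am red.rm)
next
  case (re u t t')
  then show ?case using rep1_down2[OF re.hyps, of c] by (simp add: red.re)
next
  case (rgc r t)
  then have nf: "\<not> free_in c t" "\<not> free_in c r" by (auto simp: free_lift)
  then show ?case using rgc'[of g "down c r" "down c t"] rgc
    by (simp add: down_lift0 down_gcs)
qed (auto intro: red.intros)

lemma am_sim: "red g X X' \<Longrightarrow> isSL X \<Longrightarrow> red g (am X V) (am X' V)"
proof (induction arbitrary: V rule: red.induct)
  case (re u t t')
  then show ?case by (simp add: am_rep1 red.re)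
next
  case (rgc r t)
  then have "red g (Sub (lift (Suc 0) 0 (am t V)) r) (gcs (am t V) r)" by (simp add: rgc')
  then show ?case using rgc by (simp add: lift_am gcs_am)
next
  case (rsubL a a' b)
  then show ?case by (simp add: red.rsubL)
next
  case (rsubR b b' a)
  then show ?case by (simp add: red.rsubR)
qed auto

lemma gcs_sim: "red g X X' \<Longrightarrow> isSL X \<Longrightarrow> red g (gcs T X) (gcs T X')"
proof (induction arbitrary: T rule: red.induct)
  case (re u t t')
  then show ?case by (simp add: gcs_rep1 red.re)
next
  case (rgc r t)
  then have "red g (Sub (lift (Suc 0) 0 (gcs T t)) r) (gcs (gcs T t) r)" by (simp add: rgc')
  then show ?case using rgc by (simp add: lift_gcs gcs_assoc)
next
  case (rsubL a a' b)
  then show ?case by (simp add: red.rsubL)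
next
  case (rsubR b b' a)
  then show ?case by (simp add: red.rsubR)
qed auto

lemma E_red: "red g t t' \<Longrightarrow> \<exists>t''. red g (wsub k u t) t'' \<and> wsub k u t'' = wsub k u t'"
proof (induction arbitrary: k rule: red.induct)
  case (rm t v)
  have "red g (wsub k u (App t v)) (am (wsub k u t) (wsub k u v))"
    using rm by (simp add: red.rm)
  then show ?case using rm by (metis wsub_am)
next
  case (re w a a')
  obtain a'' where a: "rep1 0 (wsub k u w) (wsub (Suc k) u a) a''"
    "wsub (Suc k) u a'' = wsub (Suc k) u a'"
    using E_rep1[OF re.hyps, of k u] by auto
  show ?case
    by (rule exI[of _ "Sub a'' (wsub k u w)"]) (simp add: a red.re)
next
  case (rgc r t)
  have "red g (Sub (lift (Suc 0) 0 (wsub k u t)) (wsub k u r)) (gcs (wsub k u t) (wsub k u r))"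
    using rgc by (intro rgc') simp_all
  then have "red g (wsub k u (Sub (lift 1 0 t) r)) (gcs (wsub k u t) (wsub k u r))"
    by simp
  then show ?case using rgc by (metis isSL_wsub wsub_gcs wsub_idem)
next
  case (rappL a a' b)
  then obtain a'' where "red g (wsub k u a) a''" "wsub k u a'' = wsub k u a'" by blast
  then show ?case by (intro exI[of _ "App a'' (wsub k u b)"]) (simp add: red.rappL)
next
  case (rappR b b' a)
  then obtain b'' where "red g (wsub k u b) b''" "wsub k u b'' = wsub k u b'" by blast
  then show ?case by (intro exI[of _ "App (wsub k u a) b''"]) (simp add: red.rappR)
next
  case (rsubL a a' b)
  then obtain a'' where "red g (wsub (Suc k) u a) a''" "wsub (Suc k) u a'' = wsub (Suc k) u a'" by blast
  then show ?case by (intro exI[of _ "Sub a'' (wsub k u b)"]) (simp add: red.rsubL)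
next
  case (rsubR b b' a)
  then obtain b'' where "red g (wsub k u b) b''" "wsub k u b'' = wsub k u b'" by blast
  then show ?case by (intro exI[of _ "Sub (wsub (Suc k) u a) b''"]) (simp add: red.rsubR)
qed



lemma Q_False: "Q g False k U = (red g)\<^sup>*\<^sup>*"
  unfolding Q_def by simp

lemma Q_refl[simp]: "Q g rp k U A A"
  unfolding Q_def by simp

lemma Q_trans: "Q g rp k U A B \<Longrightarrow> Q g rp k U B C \<Longrightarrow> Q g rp k U A C"
  unfolding Q_def by (rule rtranclp_trans)

lemma Q_red: "red g A B \<Longrightarrow> Q g rp k U A B"
  unfolding Q_def by auto

lemma Q_red_star: "(red g)\<^sup>*\<^sup>* A B \<Longrightarrow> Q g rp k U A B"
  unfolding Q_def by (induction rule: rtranclp_induct) (auto intro: rtranclp.rtrancl_into_rtrancl)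

lemma Q_rep1: "rep1 k U A B \<Longrightarrow> Q g True k U A B"
  unfolding Q_def by auto

lemma Q_induct[consumes 1, case_names refl red rep]:
  assumes "Q g rp k U A B"
    and "P A"
    and "\<And>B C. Q g rp k U A B \<Longrightarrow> P B \<Longrightarrow> red g B C \<Longrightarrow> P C"
    and "\<And>B C. Q g rp k U A B \<Longrightarrow> P B \<Longrightarrow> rp \<Longrightarrow> rep1 k U B C \<Longrightarrow> P C"
  shows "P B"
  using assms(1) unfolding Q_def
proof (induction rule: rtranclp_induct)
  case base
  then show ?case using assms(2) by simp
next
  case (step y z)
  then show ?case using assms(3,4) unfolding Q_def by blast
qed

lemma Q_map_inv:
  assumes "Q g rp k U A B" "I A"
    and "\<And>A B. red g A B \<Longrightarrow> I A \<Longrightarrow> I B"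
    and "\<And>A B. rp \<Longrightarrow> rep1 k U A B \<Longrightarrow> I A \<Longrightarrow> I B"
    and "\<And>A B. red g A B \<Longrightarrow> I A \<Longrightarrow> Q g rp k' U' (f A) (f B)"
    and "\<And>A B. rp \<Longrightarrow> rep1 k U A B \<Longrightarrow> I A \<Longrightarrow> Q g rp k' U' (f A) (f B)"
  shows "Q g rp k' U' (f A) (f B) \<and> I B"
  using assms(1)
proof (induction rule: Q_induct)
  case refl
  then show ?case using assms(2) by simp
next
  case (red B C)
  then show ?case using assms(3,5) Q_trans by blast
next
  case (rep B C)
  then show ?case using assms(4,6) Q_trans by blast
qed

lemma Q_map:
  assumes "Q g rp k U A B"
    and "\<And>A B. red g A B \<Longrightarrow> Q g rp k' U' (f A) (f B)"
    and "\<And>A B. rp \<Longrightarrow> rep1 k U A B \<Longrightarrow> Q g rp k' U' (f A) (f B)"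
  shows "Q g rp k' U' (f A) (f B)"
  using Q_map_inv[where I="\<lambda>_. True", OF assms(1)] assms(2,3) by blast

lemma Q_appL: "Q g rp k U a a' \<Longrightarrow> Q g rp k U (App a b) (App a' b)"
  by (erule Q_map[where f="\<lambda>x. App x b"]) (auto intro: Q_red Q_rep1 red.intros rep1.intros)
lemma Q_appR: "Q g rp k U b b' \<Longrightarrow> Q g rp k U (App a b) (App a b')"
  by (erule Q_map[where f="\<lambda>x. App a x"]) (auto intro: Q_red Q_rep1 red.intros rep1.intros)
lemma Q_subL: "Q g rp (Suc k) U a a' \<Longrightarrow> Q g rp k U (Sub a b) (Sub a' b)"
  by (erule Q_map[where f="\<lambda>x. Sub x b"]) (auto intro: Q_red Q_rep1 red.intros rep1.intros)
lemma Q_subR: "Q g rp k U b b' \<Longrightarrow> Q g rp k U (Sub a b) (Sub a b')"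
  by (erule Q_map[where f="\<lambda>x. Sub a x"]) (auto intro: Q_red Q_rep1 red.intros rep1.intros)

lemma Q_lift: "Q g rp k U A B \<Longrightarrow> Q g rp (k + n) U (lift n 0 A) (lift n 0 B)"
  by (erule Q_map[where f="lift n 0"]) (auto intro: Q_red Q_rep1 red_lift rep1_lift_low)

lemma Q_lift1: "Q g rp k U A B \<Longrightarrow> Q g rp (Suc k) U (lift (Suc 0) 0 A) (lift (Suc 0) 0 B)"
  using Q_lift[of g rp k U A B 1] by simp

lemma Q_isSL: "Q g rp k U X Y \<Longrightarrow> isSL X \<Longrightarrow> isSL Y"
  by (induction rule: Q_induct) (auto dest: red_isSL rep1_isSL)

lemma Q_am_left: "Q g rp k U X X' \<Longrightarrow> isSL X \<Longrightarrow> Q g rp k U (am X V) (am X' V)"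
proof -
  assume a: "Q g rp k U X X'" "isSL X"
  have "Q g rp k U (am X V) (am X' V) \<and> isSL X'"
  proof (rule Q_map_inv[where I=isSL and f="\<lambda>x. am x V", OF a])
    show "\<And>A B. red g A B \<Longrightarrow> isSL A \<Longrightarrow> isSL B" by (rule red_isSL)
    show "\<And>A B. rp \<Longrightarrow> rep1 k U A B \<Longrightarrow> isSL A \<Longrightarrow> isSL B" by (rule rep1_isSL)
    show "\<And>A B. red g A B \<Longrightarrow> isSL A \<Longrightarrow> Q g rp k U (am A V) (am B V)"
      by (rule Q_red, rule am_sim)
    show "\<And>A B. rp \<Longrightarrow> rep1 k U A B \<Longrightarrow> isSL A \<Longrightarrow> Q g rp k U (am A V) (am B V)"
      by (simp add: Q_rep1 am_rep1)
  qed
  then show ?thesis by simp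
qed

lemma Q_am_right: "Q g rp k U V V' \<Longrightarrow> isSL X \<Longrightarrow> Q g rp k U (am X V) (am X V')"
proof (induction X arbitrary: k V V')
  case (Lam s)
  then show ?case by (simp add: Q_subR)
next
  case (Sub t w)
  then show ?case by (simp add: Q_subL Q_lift1)
qed auto

lemma Q_gcs_left: "Q g rp k U T T' \<Longrightarrow> isSL r \<Longrightarrow> Q g rp k U (gcs T r) (gcs T' r)"
proof (induction r arbitrary: k T T')
  case (Sub t w)
  then show ?case by (simp add: Q_subL Q_lift1)
qed auto

lemma Q_gcs_right: "Q g rp k U X X' \<Longrightarrow> isSL X \<Longrightarrow> Q g rp k U (gcs T X) (gcs T X')"
proof -
  assume a: "Q g rp k U X X'" "isSL X"
  have "Q g rp k U (gcs T X) (gcs T X') \<and> isSL X'"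
  proof (rule Q_map_inv[where I=isSL and f="\<lambda>x. gcs T x", OF a])
    show "\<And>A B. red g A B \<Longrightarrow> isSL A \<Longrightarrow> isSL B" by (rule red_isSL)
    show "\<And>A B. rp \<Longrightarrow> rep1 k U A B \<Longrightarrow> isSL A \<Longrightarrow> isSL B" by (rule rep1_isSL)
    show "\<And>A B. red g A B \<Longrightarrow> isSL A \<Longrightarrow> Q g rp k U (gcs T A) (gcs T B)"
      by (rule Q_red, rule gcs_sim)
    show "\<And>A B. rp \<Longrightarrow> rep1 k U A B \<Longrightarrow> isSL A \<Longrightarrow> Q g rp k U (gcs T A) (gcs T B)"
      by (simp add: Q_rep1 gcs_rep1)
  qed
  then show ?thesis by simp
qed

lemma Q_wsub_val: "Q g rp k U V V' \<Longrightarrow> Q g rp (Suc (k + i)) U (wsub i V X) (wsub i V' X)"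
proof (induction X arbitrary: i)
  case (Var x)
  then show ?case using Q_lift[OF Var, of "Suc i"] by (auto simp: add.commute)
next
  case (App X1 X2)
  then show ?case by (metis Q_appL Q_appR Q_trans wsub.simps(3))
next
  case (Sub X1 X2)
  have "Q g rp (Suc (Suc (k + i))) U (wsub (Suc i) V X1) (wsub (Suc i) V' X1)"
    using Sub.IH(1)[OF Sub.prems, of "Suc i"] by simp
  then have 1: "Q g rp (Suc (k + i)) U (Sub (wsub (Suc i) V X1) (wsub i V X2)) (Sub (wsub (Suc i) V' X1) (wsub i V X2))"
    by (rule Q_subL)
  have 2: "Q g rp (Suc (k + i)) U (Sub (wsub (Suc i) V' X1) (wsub i V X2)) (Sub (wsub (Suc i) V' X1) (wsub i V' X2))"
    using Sub.IH(2)[OF Sub.prems] by (rule Q_subR)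
  show ?case using Q_trans[OF 1 2] by simp
qed simp

lemma red_wsub_val: "(red g)\<^sup>*\<^sup>* V V' \<Longrightarrow> (red g)\<^sup>*\<^sup>* (wsub i V X) (wsub i V' X)"
  using Q_wsub_val[of g False 0 U V V' i X] by (simp add: Q_False)

lemma Q_free0: "Q g rp (Suc k) U X Y \<Longrightarrow> \<not> free_in 0 X \<Longrightarrow> \<not> free_in 0 Y"
  by (induction rule: Q_induct) (auto dest: free_red free_rep1)

lemma rep1_down0: "rep1 (Suc k) U X X' \<Longrightarrow> \<not> free_in 0 X \<Longrightarrow> rep1 k U (down 0 X) (down 0 X')"
  using rep1_down[of "Suc k" U X X' 0] by simp

lemma Q_down: "Q g rp (Suc k) U X X' \<Longrightarrow> \<not> free_in 0 X \<Longrightarrow> Q g rp k U (down 0 X) (down 0 X')"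
proof -
  assume a: "Q g rp (Suc k) U X X'" "\<not> free_in 0 X"
  have "Q g rp k U (down 0 X) (down 0 X') \<and> \<not> free_in 0 X'"
  proof (rule Q_map_inv[where I="\<lambda>x. \<not> free_in 0 x" and f="down 0", OF a])
    show "\<And>A B. red g A B \<Longrightarrow> \<not> free_in 0 A \<Longrightarrow> \<not> free_in 0 B" using free_red by blast
    show "\<And>A B. rp \<Longrightarrow> rep1 (Suc k) U A B \<Longrightarrow> \<not> free_in 0 A \<Longrightarrow> \<not> free_in 0 B"
      using free_rep1 by blast
    show "\<And>A B. red g A B \<Longrightarrow> \<not> free_in 0 A \<Longrightarrow> Q g rp k U (down 0 A) (down 0 B)"
      by (rule Q_red, rule red_down)
    show "\<And>A B. rp \<Longrightarrow> rep1 (Suc k) U A B \<Longrightarrow> \<not> free_in 0 A \<Longrightarrow> Q g rp k U (down 0 A) (down 0 B)"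
      by (simp add: Q_rep1 rep1_down0)
  qed
  then show ?thesis by simp
qed

lemma red_star_down: "(red g)\<^sup>*\<^sup>* X X' \<Longrightarrow> \<not> free_in 0 X \<Longrightarrow> (red g)\<^sup>*\<^sup>* (down 0 X) (down 0 X')"
  using Q_down[of g False 0 U X X'] by (simp add: Q_False)

lemma red_star_free0: "(red g)\<^sup>*\<^sup>* X X' \<Longrightarrow> \<not> free_in 0 X \<Longrightarrow> \<not> free_in 0 X'"
  using Q_free0[of g False 0 U X X'] by (simp add: Q_False)

lemma red_star_isSL: "(red g)\<^sup>*\<^sup>* X X' \<Longrightarrow> isSL X \<Longrightarrow> isSL X'"
  using Q_isSL[of g False 0 U X X'] by (simp add: Q_False)

lemma fill_red: "(rep1 0 V)\<^sup>*\<^sup>* A A' \<Longrightarrow> (red g)\<^sup>*\<^sup>* (Sub A V) (Sub A' V)"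
  by (induction rule: rtranclp_induct) (auto intro: red.re rtranclp.rtrancl_into_rtrancl)

lemma fill_red': "(red g)\<^sup>*\<^sup>* (Sub A V) (Sub (wsub 0 V A) V)"
  by (rule fill_red[OF fill])

lemma E'_step: "red g A B \<Longrightarrow> (red g)\<^sup>*\<^sup>* (Sub (wsub 0 V A) V) (Sub (wsub 0 V B) V)"
proof -
  assume "red g A B"
  then obtain t'' where t: "red g (wsub 0 V A) t''" "wsub 0 V t'' = wsub 0 V B"
    using E_red by blast
  have "red g (Sub (wsub 0 V A) V) (Sub t'' V)" using t(1) by (rule red.rsubL)
  moreover have "(red g)\<^sup>*\<^sup>* (Sub t'' V) (Sub (wsub 0 V B) V)"
    using fill_red'[of g t'' V] t(2) by simp
  ultimately show ?thesis by (meson converse_rtranclp_into_rtranclp)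
qed

lemma E'_star: "(red g)\<^sup>*\<^sup>* A B \<Longrightarrow> (red g)\<^sup>*\<^sup>* (Sub (wsub 0 V A) V) (Sub (wsub 0 V B) V)"
  by (induction rule: rtranclp_induct) (auto dest: E'_step[where V=V] intro: rtranclp_trans)

lemma Q_wsub_inner: "Q g rp (Suc k) U X X' \<Longrightarrow> Q g rp k U (Sub (wsub 0 V X) V) (Sub (wsub 0 V X') V)"
  by (erule Q_map[where f="\<lambda>x. Sub (wsub 0 V x) V"])
     (auto intro: Q_red_star E'_step Q_rep1 rep1.r_subL wsub_rep1)

lemma Q_Sub_wsub_same: "Q g rp 0 U A B \<Longrightarrow> (red g)\<^sup>*\<^sup>* (Sub (wsub 0 U A) U) (Sub (wsub 0 U B) U)"
proof (induction rule: Q_induct)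
  case (red B C)
  then show ?case by (meson E'_step rtranclp_trans)
next
  case (rep B C)
  then show ?case by (simp add: rep1_wsub_same)
qed simp



lemma rs_appL: "(red g)\<^sup>*\<^sup>* a a' \<Longrightarrow> (red g)\<^sup>*\<^sup>* (App a b) (App a' b)"
  using Q_appL[of g False 0 undefined a a' b] by (simp add: Q_False)
lemma rs_appR: "(red g)\<^sup>*\<^sup>* b b' \<Longrightarrow> (red g)\<^sup>*\<^sup>* (App a b) (App a b')"
  using Q_appR[of g False 0 undefined b b' a] by (simp add: Q_False)
lemma rs_subL: "(red g)\<^sup>*\<^sup>* a a' \<Longrightarrow> (red g)\<^sup>*\<^sup>* (Sub a b) (Sub a' b)"
  using Q_subL[of g False 0 undefined a a' b] by (simp add: Q_False)
lemma rs_subR: "(red g)\<^sup>*\<^sup>* b b' \<Longrightarrow> (red g)\<^sup>*\<^sup>* (Sub a b) (Sub a b')"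
  using Q_subR[of g False 0 undefined b b' a] by (simp add: Q_False)
lemma rs_am_left: "(red g)\<^sup>*\<^sup>* X X' \<Longrightarrow> isSL X \<Longrightarrow> (red g)\<^sup>*\<^sup>* (am X V) (am X' V)"
  using Q_am_left[of g False 0 undefined X X' V] by (simp add: Q_False)
lemma rs_am_right: "(red g)\<^sup>*\<^sup>* V V' \<Longrightarrow> isSL X \<Longrightarrow> (red g)\<^sup>*\<^sup>* (am X V) (am X V')"
  using Q_am_right[of g False 0 undefined V V' X] by (simp add: Q_False)
lemma rs_gcs_left: "(red g)\<^sup>*\<^sup>* T T' \<Longrightarrow> isSL r \<Longrightarrow> (red g)\<^sup>*\<^sup>* (gcs T r) (gcs T' r)"
  using Q_gcs_left[of g False 0 undefined T T' r] by (simp add: Q_False)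
lemma rs_gcs_right: "(red g)\<^sup>*\<^sup>* X X' \<Longrightarrow> isSL X \<Longrightarrow> (red g)\<^sup>*\<^sup>* (gcs T X) (gcs T X')"
  using Q_gcs_right[of g False 0 undefined X X' T] by (simp add: Q_False)

definition gcond :: "bool \<Rightarrow> trm \<Rightarrow> trm \<Rightarrow> bool" where
  "gcond g t u \<longleftrightarrow> g \<and> isSL u \<and> \<not> free_in 0 t"

lemma F_Sub_c: "gcond g t u \<Longrightarrow> F g (Sub t u) = gcs (down 0 (F g t)) (F g u)"
  unfolding gcond_def by simp

lemma F_Sub_n: "\<not> gcond g t u \<Longrightarrow> F g (Sub t u) = Sub (wsub 0 (F g u) (F g t)) (F g u)"
  unfolding gcond_def F.simps by (rule if_not_P)

declare F.simps(4)[simp del]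

lemma isSL_F: "isSL t \<Longrightarrow> isSL (F g t)"
proof (induction t)
  case (Sub t1 t2)
  then show ?case by (cases "gcond g t1 t2") (auto simp: F_Sub_c F_Sub_n gcond_def)
qed auto

lemma free_F: "free_in n (F g t) \<Longrightarrow> free_in n t"
proof (induction t arbitrary: n)
  case (App t1 t2)
  then show ?case by (auto simp: free_am isSL_F split: if_splits)
next
  case (Sub t1 t2)
  show ?case
  proof (cases "gcond g t1 t2")
    case True
    then have nf: "\<not> free_in 0 (F g t1)" using Sub.IH(1) unfolding gcond_def by blast
    from True Sub.prems have "free_in n (gcs (down 0 (F g t1)) (F g t2))" by (simp add: F_Sub_c)
    then have "free_in n (down 0 (F g t1)) \<or> free_in n (F g t2)" by (rule free_gcs)
    then show ?thesis using free_down[OF nf, of n] Sub.IH by auto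
  next
    case False
    then have "free_in n (Sub (wsub 0 (F g t2) (F g t1)) (F g t2))" using Sub.prems by (simp add: F_Sub_n)
    then show ?thesis using free_wsub[of "Suc n" 0 "F g t2" "F g t1"] Sub.IH by auto
  qed
qed auto

lemma nofree_F: "\<not> free_in n t \<Longrightarrow> \<not> free_in n (F g t)"
  using free_F by blast

lemma down_lift_comm: "\<not> free_in 0 X \<Longrightarrow> down 0 (lift d (Suc c) X) = lift d c (down 0 X)"
proof -
  assume a: "\<not> free_in 0 X"
  have "lift d (Suc c) X = lift (Suc 0) 0 (lift d c (down 0 X))"
    using down_eq[OF a] by (metis lift_comm0')
  then show ?thesis by simp
qed

lemma F_lift: "F g (lift d c t) = lift d c (F g t)"
proof (induction t arbitrary: c)
  case (App t1 t2)
  then show ?case by (simp add: lift_am)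
next
  case (Sub t1 t2)
  have fl: "free_in 0 (lift d (Suc c) t1) = free_in 0 t1" by (simp add: free_lift)
  have gc: "gcond g (lift d (Suc c) t1) (lift d c t2) = gcond g t1 t2"
    using fl by (simp add: gcond_def)
  show ?case
  proof (cases "gcond g t1 t2")
    case True
    then have nf: "\<not> free_in 0 (F g t1)" by (simp add: nofree_F gcond_def)
    show ?thesis using True gc Sub.IH by (simp add: F_Sub_c lift_gcs down_lift_comm[OF nf])
  next
    case False
    then show ?thesis using gc Sub.IH by (simp add: F_Sub_n lift_wsub2)
  qed
qed auto

lemma F_lift1: "F g (lift (Suc 0) 0 t) = lift (Suc 0) 0 (F g t)"
  by (rule F_lift)

lemma AF: "(red g)\<^sup>*\<^sup>* (App (F g t) (F g u)) (F g (App t u))"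
  by (auto intro: red.rm isSL_F)

lemma SF: "(red g)\<^sup>*\<^sup>* (Sub (F g t) (F g u)) (F g (Sub t u))"
proof (cases "gcond g t u")
  case True
  then have nf: "\<not> free_in 0 (F g t)" by (simp add: nofree_F gcond_def)
  have "red g (Sub (lift (Suc 0) 0 (down 0 (F g t))) (F g u)) (gcs (down 0 (F g t)) (F g u))"
    using True by (intro rgc') (auto simp: isSL_F gcond_def)
  then show ?thesis using True down_eq[OF nf] by (simp add: F_Sub_c)
next
  case False
  then show ?thesis using fill_red'[of g "F g t" "F g u"] by (simp add: F_Sub_n)
qed

lemma L1: "(red g)\<^sup>*\<^sup>* t (F g t)"
proof (induction t)
  case (App t1 t2)
  then show ?case by (meson AF rs_appL rs_appR rtranclp_trans)
next
  case (Sub t1 t2)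
  then show ?case by (meson SF rs_subL rs_subR rtranclp_trans)
qed auto



lemma AM: "isSL t \<Longrightarrow> (red g)\<^sup>*\<^sup>* (am (F g t) (F g u)) (F g (am t u))"
proof (induction t arbitrary: u)
  case (Lam s)
  have "(red g)\<^sup>*\<^sup>* (Sub s (F g u)) (Sub (F g s) (F g u))" by (rule rs_subL[OF L1])
  then show ?case using SF[of g s u] by (simp add: rtranclp_trans)
next
  case (Sub t1 w)
  have sl: "isSL t1" using Sub.prems by simp
  let ?u = "lift (Suc 0) 0 u"
  have IH: "(red g)\<^sup>*\<^sup>* (am (F g t1) (lift (Suc 0) 0 (F g u))) (F g (am t1 ?u))"
    using Sub.IH(1)[OF sl, of ?u] by (simp add: F_lift1)
  have fr: "free_in 0 (am t1 ?u) = free_in 0 t1" using sl by (simp add: free_am free_lift)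
  have gc: "gcond g (am t1 ?u) w = gcond g t1 w" using fr by (simp add: gcond_def)
  show ?case
  proof (cases "gcond g t1 w")
    case True
    then have nf: "\<not> free_in 0 (F g t1)" and slw: "isSL (F g w)"
      by (auto simp: nofree_F gcond_def isSL_F)
    have nf2: "\<not> free_in 0 (am (F g t1) (lift (Suc 0) 0 (F g u)))"
      using nf sl by (simp add: free_am isSL_F free_lift)
    have "am (F g (Sub t1 w)) (F g u) = am (gcs (down 0 (F g t1)) (F g w)) (F g u)"
      using True by (simp add: F_Sub_c)
    also have "\<dots> = gcs (am (down 0 (F g t1)) (F g u)) (F g w)"
      using sl slw by (simp add: gcs_am isSL_F)
    also have "am (down 0 (F g t1)) (F g u) = down 0 (am (F g t1) (lift (Suc 0) 0 (F g u)))"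
      using nf by (simp add: down_am free_lift)
    finally have e: "am (F g (Sub t1 w)) (F g u) = gcs (down 0 (am (F g t1) (lift (Suc 0) 0 (F g u)))) (F g w)" .
    have "(red g)\<^sup>*\<^sup>* (down 0 (am (F g t1) (lift (Suc 0) 0 (F g u)))) (down 0 (F g (am t1 ?u)))"
      by (rule red_star_down[OF IH nf2])
    then have "(red g)\<^sup>*\<^sup>* (gcs (down 0 (am (F g t1) (lift (Suc 0) 0 (F g u)))) (F g w))
                  (gcs (down 0 (F g (am t1 ?u))) (F g w))"
      using slw by (rule rs_gcs_left)
    moreover have "F g (am (Sub t1 w) u) = gcs (down 0 (F g (am t1 ?u))) (F g w)"
      using True gc by (simp add: F_Sub_c)
    ultimately show ?thesis using e by simp
  next
    case False
    have "am (F g (Sub t1 w)) (F g u) = Sub (am (wsub 0 (F g w) (F g t1)) (lift (Suc 0) 0 (F g u))) (F g w)"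
      using False by (simp add: F_Sub_n)
    moreover have "(red g)\<^sup>*\<^sup>* (Sub (am (wsub 0 (F g w) (F g t1)) (lift (Suc 0) 0 (F g u))) (F g w))
        (Sub (wsub 0 (F g w) (am (F g t1) (lift (Suc 0) 0 (F g u)))) (F g w))"
      using fill_red'[of g "am (wsub 0 (F g w) (F g t1)) (lift (Suc 0) 0 (F g u))" "F g w"]
      by (simp add: wsub_am_t isSL_F sl)
    moreover have "(red g)\<^sup>*\<^sup>* (Sub (wsub 0 (F g w) (am (F g t1) (lift (Suc 0) 0 (F g u)))) (F g w))
        (Sub (wsub 0 (F g w) (F g (am t1 ?u))) (F g w))"
      by (rule E'_star[OF IH])
    moreover have "F g (am (Sub t1 w) u) = Sub (wsub 0 (F g w) (F g (am t1 ?u))) (F g w)"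
      using False gc by (simp add: F_Sub_n)
    ultimately show ?thesis by (metis rtranclp_trans)
  qed
qed auto

lemma GC: "isSL r \<Longrightarrow> (red g)\<^sup>*\<^sup>* (gcs (F g t) (F g r)) (F g (gcs t r))"
proof (induction r arbitrary: t)
  case (Sub r1 w)
  have sl: "isSL r1" using Sub.prems by simp
  let ?t = "lift (Suc 0) 0 t"
  have IH: "(red g)\<^sup>*\<^sup>* (gcs (lift (Suc 0) 0 (F g t)) (F g r1)) (F g (gcs ?t r1))"
    using Sub.IH(1)[OF sl, of ?t] by (simp add: F_lift1)
  have c12: "gcond g r1 w \<Longrightarrow> gcond g (gcs ?t r1) w"
    unfolding gcond_def using free_gcs[of 0 ?t r1] by (auto simp: free_lift)
  have rhs_n: "\<not> gcond g (gcs ?t r1) w \<Longrightarrow> F g (gcs t (Sub r1 w)) = Sub (wsub 0 (F g w) (F g (gcs ?t r1))) (F g w)"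
    by (simp add: F_Sub_n)
  have rhs_c: "gcond g (gcs ?t r1) w \<Longrightarrow> F g (gcs t (Sub r1 w)) = gcs (down 0 (F g (gcs ?t r1))) (F g w)"
    by (simp add: F_Sub_c)
  show ?case
  proof (cases "gcond g r1 w")
    case True
    then have nf: "\<not> free_in 0 (F g r1)" and slw: "isSL (F g w)"
      by (auto simp: nofree_F gcond_def isSL_F)
    have nf2: "\<not> free_in 0 (gcs (lift (Suc 0) 0 (F g t)) (F g r1))"
      using nf free_gcs[of 0 "lift (Suc 0) 0 (F g t)" "F g r1"] by (auto simp: free_lift)
    have "gcs (F g t) (F g (Sub r1 w)) = gcs (F g t) (gcs (down 0 (F g r1)) (F g w))"
      using True by (simp add: F_Sub_c)
    also have "\<dots> = gcs (gcs (F g t) (down 0 (F g r1))) (F g w)"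
      using slw by (simp add: gcs_assoc)
    also have "gcs (F g t) (down 0 (F g r1)) = down 0 (gcs (lift (Suc 0) 0 (F g t)) (F g r1))"
      using nf by (simp add: down_gcs free_lift)
    finally have e: "gcs (F g t) (F g (Sub r1 w)) = gcs (down 0 (gcs (lift (Suc 0) 0 (F g t)) (F g r1))) (F g w)" .
    have "(red g)\<^sup>*\<^sup>* (gcs (down 0 (gcs (lift (Suc 0) 0 (F g t)) (F g r1))) (F g w))
                  (gcs (down 0 (F g (gcs ?t r1))) (F g w))"
      using red_star_down[OF IH nf2] slw by (rule rs_gcs_left)
    then show ?thesis using e rhs_c c12[OF True] by simp
  next
    case False
    have slr: "isSL (F g r1)" using sl by (simp add: isSL_F)
    have "gcs (F g t) (F g (Sub r1 w)) = Sub (gcs (lift (Suc 0) 0 (F g t)) (wsub 0 (F g w) (F g r1))) (F g w)"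
      using False by (simp add: F_Sub_n)
    also have "\<dots> = Sub (wsub 0 (F g w) (gcs (lift (Suc 0) 0 (F g t)) (F g r1))) (F g w)"
      using slr by (simp add: wsub_gcs wsub_nofree free_lift)
    finally have e: "gcs (F g t) (F g (Sub r1 w)) = Sub (wsub 0 (F g w) (gcs (lift (Suc 0) 0 (F g t)) (F g r1))) (F g w)" .
    have st: "(red g)\<^sup>*\<^sup>* (gcs (F g t) (F g (Sub r1 w))) (Sub (wsub 0 (F g w) (F g (gcs ?t r1))) (F g w))"
      using E'_star[OF IH] e by simp
    show ?thesis
    proof (cases "gcond g (gcs ?t r1) w")
      case True
      then have nf: "\<not> free_in 0 (F g (gcs ?t r1))" and slw: "isSL (F g w)" and gg: g
        by (auto simp: nofree_F gcond_def isSL_F)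
      have "Sub (wsub 0 (F g w) (F g (gcs ?t r1))) (F g w) = Sub (lift (Suc 0) 0 (down 0 (F g (gcs ?t r1)))) (F g w)"
        using nf by (simp add: wsub_nofree down_eq[symmetric])
      moreover have "red g (Sub (lift (Suc 0) 0 (down 0 (F g (gcs ?t r1)))) (F g w)) (gcs (down 0 (F g (gcs ?t r1))) (F g w))"
        using gg slw by (rule rgc')
      ultimately show ?thesis using st rhs_c[OF True] by (metis rtranclp.rtrancl_into_rtrancl)
    next
      case False
      then show ?thesis using st rhs_n by simp
    qed
  qed
qed auto



lemma rep1_free_other: "rep1 j u a a' \<Longrightarrow> n < j \<Longrightarrow> free_in n a' = free_in n a"
  using free_rep1[of j u a a' n] free_rep1_back[of j u a a' n] by auto

lemma R: "rep1 k u t t' \<Longrightarrow> Q g True k (F g u) (F g t) (F g t')"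
proof (induction rule: rep1.induct)
  case (r_var k u)
  then show ?case by (simp add: F_lift Q_rep1 rep1.r_var)
next
  case (r_appL k u a a' b)
  show ?case
  proof (cases "isSL a")
    case True
    then have "isSL a'" using r_appL.hyps rep1_isSL by blast
    then show ?thesis using True r_appL.IH by (simp add: Q_am_left isSL_F)
  next
    case False
    show ?thesis
    proof (cases "isSL a'")
      case True
      have "Q g True k (F g u) (App (F g a) (F g b)) (App (F g a') (F g b))"
        using r_appL.IH by (rule Q_appL)
      moreover have "red g (App (F g a') (F g b)) (am (F g a') (F g b))"
        using True by (simp add: isSL_F red.rm)
      ultimately show ?thesis using False True by (simp add: Q_trans Q_red)
    next
      case False
      then show ?thesis using \<open>\<not> isSL a\<close> r_appL.IH by (simp add: Q_appL)
    qed
  qed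
next
  case (r_appR k u b b' a)
  then show ?case by (cases "isSL a") (simp_all add: Q_am_right isSL_F Q_appR)
next
  case (r_subL k u a a' b)
  have gc: "gcond g a' b = gcond g a b"
    using rep1_free_other[OF r_subL.hyps, of 0] by (simp add: gcond_def)
  show ?case
  proof (cases "gcond g a b")
    case True
    then have nf: "\<not> free_in 0 (F g a)" and slb: "isSL (F g b)"
      by (auto simp: nofree_F gcond_def isSL_F)
    have "Q g True k (F g u) (down 0 (F g a)) (down 0 (F g a'))"
      by (rule Q_down[OF r_subL.IH nf])
    then show ?thesis using True gc slb by (simp add: F_Sub_c Q_gcs_left)
  next
    case False
    then show ?thesis using gc r_subL.IH by (simp add: F_Sub_n Q_wsub_inner)
  qed
next
  case (r_subR k u b b' a)
  have c12: "gcond g a b \<Longrightarrow> gcond g a b'"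
    using rep1_isSL[OF r_subR.hyps] by (auto simp: gcond_def)
  show ?case
  proof (cases "gcond g a b")
    case True
    then show ?thesis using c12 r_subR.IH by (simp add: F_Sub_c Q_gcs_right isSL_F gcond_def)
  next
    case False
    show ?thesis
    proof (cases "gcond g a b'")
      case True
      then have nf: "\<not> free_in 0 (F g a)" and slb: "isSL (F g b')" and gg: g
        by (auto simp: nofree_F gcond_def isSL_F)
      have "F g (Sub a b) = Sub (lift (Suc 0) 0 (down 0 (F g a))) (F g b)"
        using False nf by (simp add: F_Sub_n wsub_nofree down_eq[symmetric])
      moreover have "Q g True k (F g u) (Sub (lift (Suc 0) 0 (down 0 (F g a))) (F g b))
             (Sub (lift (Suc 0) 0 (down 0 (F g a))) (F g b'))"
        using r_subR.IH by (rule Q_subR)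
      moreover have "red g (Sub (lift (Suc 0) 0 (down 0 (F g a))) (F g b')) (F g (Sub a b'))"
        using True gg slb by (simp add: F_Sub_c rgc')
      ultimately show ?thesis by (metis Q_red Q_trans)
    next
      case False
      have 1: "Q g True k (F g u) (Sub (wsub 0 (F g b) (F g a)) (F g b)) (Sub (wsub 0 (F g b') (F g a)) (F g b))"
        using Q_wsub_val[OF r_subR.IH, of 0 "F g a"] by (simp add: Q_subL)
      have 2: "Q g True k (F g u) (Sub (wsub 0 (F g b') (F g a)) (F g b)) (Sub (wsub 0 (F g b') (F g a)) (F g b'))"
        using r_subR.IH by (rule Q_subR)
      show ?thesis using Q_trans[OF 1 2] False \<open>\<not> gcond g a b\<close> by (simp add: F_Sub_n)
    qed
  qed
qed

lemma L3: "red g a b \<Longrightarrow> (red g)\<^sup>*\<^sup>* (F g a) (F g b)"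
proof (induction rule: red.induct)
  case (rm t u)
  then show ?case by (simp add: AM)
next
  case (re u t t')
  have nc: "\<not> gcond g t u" using rep1_free_k[OF re] by (simp add: gcond_def)
  have st: "(red g)\<^sup>*\<^sup>* (F g (Sub t u)) (Sub (wsub 0 (F g u) (F g t')) (F g u))"
    using Q_Sub_wsub_same[OF R[OF re, of g]] nc by (simp add: F_Sub_n)
  show ?case
  proof (cases "gcond g t' u")
    case True
    then have nf: "\<not> free_in 0 (F g t')" and slu: "isSL (F g u)" and gg: g
      by (auto simp: nofree_F gcond_def isSL_F)
    have "Sub (wsub 0 (F g u) (F g t')) (F g u) = Sub (lift (Suc 0) 0 (down 0 (F g t'))) (F g u)"
      using nf by (simp add: wsub_nofree down_eq[symmetric])
    moreover have "red g (Sub (lift (Suc 0) 0 (down 0 (F g t'))) (F g u)) (F g (Sub t' u))"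
      using True gg slu by (simp add: F_Sub_c rgc')
    ultimately show ?thesis using st by (metis rtranclp.rtrancl_into_rtrancl)
  next
    case False
    then show ?thesis using st by (simp add: F_Sub_n)
  qed
next
  case (rgc r t)
  have "gcond g (lift 1 0 t) r" using rgc by (simp add: gcond_def free_lift)
  then have "F g (Sub (lift 1 0 t) r) = gcs (F g t) (F g r)" by (simp add: F_Sub_c F_lift1)
  then show ?case using GC[OF rgc(2), of g t] by simp
next
  case (rappL a a' b)
  show ?case
  proof (cases "isSL a")
    case True
    then have "isSL a'" using rappL.hyps red_isSL by blast
    then show ?thesis using True rappL.IH by (simp add: rs_am_left isSL_F)
  next
    case False
    show ?thesis
    proof (cases "isSL a'")
      case True
      have "(red g)\<^sup>*\<^sup>* (App (F g a) (F g b)) (App (F g a') (F g b))"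
        using rappL.IH by (rule rs_appL)
      moreover have "red g (App (F g a') (F g b)) (am (F g a') (F g b))"
        using True by (simp add: isSL_F red.rm)
      ultimately show ?thesis using False True by simp
    next
      case False
      then show ?thesis using \<open>\<not> isSL a\<close> rappL.IH by (simp add: rs_appL)
    qed
  qed
next
  case (rappR b b' a)
  then show ?case by (cases "isSL a") (simp_all add: rs_am_right isSL_F rs_appR)
next
  case (rsubL a a' b)
  have c12: "gcond g a b \<Longrightarrow> gcond g a' b"
    using free_red[OF rsubL.hyps] by (auto simp: gcond_def)
  show ?case
  proof (cases "gcond g a b")
    case True
    then have nf: "\<not> free_in 0 (F g a)" and slb: "isSL (F g b)"
      by (auto simp: nofree_F gcond_def isSL_F)
    have "(red g)\<^sup>*\<^sup>* (down 0 (F g a)) (down 0 (F g a'))"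
      by (rule red_star_down[OF rsubL.IH nf])
    then show ?thesis using True c12 slb by (simp add: F_Sub_c rs_gcs_left)
  next
    case False
    have st: "(red g)\<^sup>*\<^sup>* (F g (Sub a b)) (Sub (wsub 0 (F g b) (F g a')) (F g b))"
      using E'_star[OF rsubL.IH] False by (simp add: F_Sub_n)
    show ?thesis
    proof (cases "gcond g a' b")
      case True
      then have nf: "\<not> free_in 0 (F g a')" and slu: "isSL (F g b)" and gg: g
        by (auto simp: nofree_F gcond_def isSL_F)
      have "Sub (wsub 0 (F g b) (F g a')) (F g b) = Sub (lift (Suc 0) 0 (down 0 (F g a'))) (F g b)"
        using nf by (simp add: wsub_nofree down_eq[symmetric])
      moreover have "red g (Sub (lift (Suc 0) 0 (down 0 (F g a'))) (F g b)) (F g (Sub a' b))"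
        using True gg slu by (simp add: F_Sub_c rgc')
      ultimately show ?thesis using st by (metis rtranclp.rtrancl_into_rtrancl)
    next
      case False
      then show ?thesis using st by (simp add: F_Sub_n)
    qed
  qed
next
  case (rsubR b b' a)
  have c12: "gcond g a b \<Longrightarrow> gcond g a b'"
    using red_isSL[OF rsubR.hyps] by (auto simp: gcond_def)
  show ?case
  proof (cases "gcond g a b")
    case True
    then show ?thesis using c12 rsubR.IH by (simp add: F_Sub_c rs_gcs_right isSL_F gcond_def)
  next
    case False
    show ?thesis
    proof (cases "gcond g a b'")
      case True
      then have nf: "\<not> free_in 0 (F g a)" and slb: "isSL (F g b')" and gg: g
        by (auto simp: nofree_F gcond_def isSL_F)
      have "F g (Sub a b) = Sub (lift (Suc 0) 0 (down 0 (F g a))) (F g b)"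
        using False nf by (simp add: F_Sub_n wsub_nofree down_eq[symmetric])
      moreover have "(red g)\<^sup>*\<^sup>* (Sub (lift (Suc 0) 0 (down 0 (F g a))) (F g b))
             (Sub (lift (Suc 0) 0 (down 0 (F g a))) (F g b'))"
        using rsubR.IH by (rule rs_subR)
      moreover have "red g (Sub (lift (Suc 0) 0 (down 0 (F g a))) (F g b')) (F g (Sub a b'))"
        using True gg slb by (simp add: F_Sub_c rgc')
      ultimately show ?thesis by (metis rtranclp.rtrancl_into_rtrancl)
    next
      case False
      have 1: "(red g)\<^sup>*\<^sup>* (Sub (wsub 0 (F g b) (F g a)) (F g b)) (Sub (wsub 0 (F g b') (F g a)) (F g b))"
        using red_wsub_val[OF rsubR.IH, of 0 "F g a"] by (simp add: rs_subL)
      have 2: "(red g)\<^sup>*\<^sup>* (Sub (wsub 0 (F g b') (F g a)) (F g b)) (Sub (wsub 0 (F g b') (F g a)) (F g b'))"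
        using rsubR.IH by (rule rs_subR)
      show ?thesis using rtranclp_trans[OF 1 2] False \<open>\<not> gcond g a b\<close> by (simp add: F_Sub_n)
    qed
  qed
qed

lemma L2: "red g a b \<Longrightarrow> (red g)\<^sup>*\<^sup>* b (F g a)"
proof (induction rule: red.induct)
  case (rm t u)
  have "(red g)\<^sup>*\<^sup>* (am t u) (am (F g t) u)" using rm by (simp add: rs_am_left L1)
  moreover have "(red g)\<^sup>*\<^sup>* (am (F g t) u) (am (F g t) (F g u))"
    using rm by (simp add: rs_am_right L1 isSL_F)
  ultimately show ?case using rm by (simp add: rtranclp_trans)
next
  case (re u t t')
  have nc: "\<not> gcond g t u" using rep1_free_k[OF re] by (simp add: gcond_def)
  have 1: "(red g)\<^sup>*\<^sup>* (Sub t' u) (Sub (wsub 0 u t) u)"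
    using fill_red'[of g t' u] rep1_wsub_same[OF re] by simp
  have 2: "(red g)\<^sup>*\<^sup>* (Sub (wsub 0 u t) u) (Sub (wsub 0 (F g u) t) (F g u))"
    by (meson L1 red_wsub_val rs_subL rs_subR rtranclp_trans)
  have 3: "(red g)\<^sup>*\<^sup>* (Sub (wsub 0 (F g u) t) (F g u)) (Sub (wsub 0 (F g u) (F g t)) (F g u))"
    by (rule E'_star[OF L1])
  show ?case using 1 2 3 nc by (simp add: F_Sub_n rtranclp_trans)
next
  case (rgc r t)
  have "gcond g (lift 1 0 t) r" using rgc by (simp add: gcond_def free_lift)
  then have e: "F g (Sub (lift 1 0 t) r) = gcs (F g t) (F g r)" by (simp add: F_Sub_c F_lift1)
  have "(red g)\<^sup>*\<^sup>* (gcs t r) (gcs (F g t) r)" using rgc by (simp add: rs_gcs_left L1)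
  moreover have "(red g)\<^sup>*\<^sup>* (gcs (F g t) r) (gcs (F g t) (F g r))" using rgc by (simp add: rs_gcs_right L1)
  ultimately show ?case using e by (simp add: rtranclp_trans)
next
  case (rappL a a' b)
  then show ?case by (meson AF L1 rs_appL rs_appR rtranclp_trans)
next
  case (rappR b b' a)
  then show ?case by (meson AF L1 rs_appL rs_appR rtranclp_trans)
next
  case (rsubL a a' b)
  then show ?case by (meson SF L1 rs_subL rs_subR rtranclp_trans)
next
  case (rsubR b b' a)
  then show ?case by (meson SF L1 rs_subL rs_subR rtranclp_trans)
qed



lemma Z_conf:
  assumes L2: "\<And>a b. R a b \<Longrightarrow> R\<^sup>*\<^sup>* b (f a)"
    and L3: "\<And>a b. R a b \<Longrightarrow> R\<^sup>*\<^sup>* (f a) (f b)"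
    and L1: "\<And>a. R\<^sup>*\<^sup>* a (f a)"
  shows "confluent R"
proof -
  have mono: "R\<^sup>*\<^sup>* (f a) (f b)" if "R\<^sup>*\<^sup>* a b" for a b
    using that by (induction rule: rtranclp_induct) (auto intro: rtranclp_trans L3)
  have c1: "\<exists>n. R\<^sup>*\<^sup>* b ((f ^^ n) a)" if "R\<^sup>*\<^sup>* a b" for a b
    using that
  proof (induction rule: rtranclp_induct)
    case base
    then show ?case by (rule exI[of _ 0]) simp
  next
    case (step y z)
    then obtain n where "R\<^sup>*\<^sup>* y ((f ^^ n) a)" by blast
    then have "R\<^sup>*\<^sup>* (f y) ((f ^^ Suc n) a)" using mono by simp
    then show ?case using L2[OF step(2)] by (meson rtranclp_trans)
  qed
  have c2: "R\<^sup>*\<^sup>* ((f ^^ n) a) ((f ^^ (n + m)) a)" for n m a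
  proof (induction m)
    case 0
    then show ?case by simp
  next
    case (Suc m)
    then show ?case using L1[of "(f ^^ (n + m)) a"] by (simp add: rtranclp_trans)
  qed
  show ?thesis unfolding confluent_def
  proof (intro allI impI)
    fix t u1 u2
    assume "R\<^sup>*\<^sup>* t u1 \<and> R\<^sup>*\<^sup>* t u2"
    then obtain n m where n: "R\<^sup>*\<^sup>* u1 ((f ^^ n) t)" and m: "R\<^sup>*\<^sup>* u2 ((f ^^ m) t)"
      using c1 by blast
    have "R\<^sup>*\<^sup>* u1 ((f ^^ (n + m)) t)" using n c2 by (meson rtranclp_trans)
    moreover have "R\<^sup>*\<^sup>* u2 ((f ^^ (n + m)) t)" using m c2[of m t n] by (simp add: add.commute rtranclp_trans)
    ultimately show "\<exists>s. R\<^sup>*\<^sup>* u1 s \<and> R\<^sup>*\<^sup>* u2 s" by blast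
  qed
qed

lemma red_confluent: "confluent (red g)"
  by (rule Z_conf[where f="F g"]) (auto intro: L1 L2 L3)

section \<open>Equivalence with the definitions\<close>

lemma plugS_snoc[simp]: "plugS (us @ [w]) t = Sub (plugS us t) w"
  by (simp add: plugS_def)

lemma plugS_Nil[simp]: "plugS [] t = t"
  by (simp add: plugS_def)

lemma isSL_plugS: "isSL (plugS us (Lam s))"
  by (induction us rule: rev_induct) auto

lemma isSL_ex: "isSL t \<Longrightarrow> \<exists>us s. t = plugS us (Lam s)"
proof (induction t)
  case (Lam s)
  then show ?case by (metis plugS_Nil)
next
  case (Sub t1 t2)
  then obtain us s where "t1 = plugS us (Lam s)" by auto
  then have "Sub t1 t2 = plugS (us @ [t2]) (Lam s)" by simp
  then show ?case by blast
qed auto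

lemma lift_add0: "lift n 0 (lift (Suc 0) 0 u) = lift (Suc n) 0 u"
  using lift_lift_same[of 0 0 "Suc 0" n u] by simp

lemma am_plugS: "am (plugS us (Lam s)) u = plugS us (Sub s (lift (length us) 0 u))"
  by (induction us arbitrary: u rule: rev_induct) (auto simp: lift_add0)

lemma gcs_plugS: "gcs t (plugS us (Lam v)) = plugS us (lift (length us) 0 t)"
  by (induction us arbitrary: t rule: rev_induct) (auto simp: lift_add0)

lemma root_m_iff: "root_m a b \<longleftrightarrow> (\<exists>t u. a = App t u \<and> isSL t \<and> b = am t u)"
proof
  assume "root_m a b"
  then show "\<exists>t u. a = App t u \<and> isSL t \<and> b = am t u"
    by (cases rule: root_m.cases) (auto simp: isSL_plugS am_plugS)
next
  assume "\<exists>t u. a = App t u \<and> isSL t \<and> b = am t u"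
  then obtain t u where "a = App t u" "isSL t" "b = am t u" by blast
  moreover obtain us s where "t = plugS us (Lam s)" using isSL_ex[OF \<open>isSL t\<close>] by blast
  ultimately show "root_m a b" by (simp add: am_plugS root_m.intros)
qed

lemma root_gcv_iff: "root_gcv a b \<longleftrightarrow> (\<exists>t r. a = Sub (lift 1 0 t) r \<and> isSL r \<and> b = gcs t r)"
proof
  assume "root_gcv a b"
  then show "\<exists>t r. a = Sub (lift 1 0 t) r \<and> isSL r \<and> b = gcs t r"
  proof (cases rule: root_gcv.cases)
    case (1 t us v)
    then show ?thesis
      by (intro exI[of _ "down 0 t"] exI[of _ "plugS us (Lam v)"])
         (simp add: isSL_plugS gcs_plugS down_eq[symmetric])
  qed
next
  assume "\<exists>t r. a = Sub (lift 1 0 t) r \<and> isSL r \<and> b = gcs t r"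
  then obtain t r where "a = Sub (lift 1 0 t) r" "isSL r" "b = gcs t r" by blast
  moreover obtain us v where "r = plugS us (Lam v)" using isSL_ex[OF \<open>isSL r\<close>] by blast
  ultimately show "root_gcv a b"
    using root_gcv.intros[of "lift 1 0 t" us v] by (simp add: gcs_plugS)
qed

lemma rep1_plug: "rep1 k u (plug W (Var (k + depth W))) (plug W (lift (Suc (k + depth W)) 0 u))"
proof (induction W arbitrary: k)
  case Hole
  then show ?case by (simp add: rep1.r_var)
next
  case (SubL W x2)
  then show ?case using SubL[of "Suc k"] by (simp add: rep1.r_subL)
qed (auto intro: rep1.intros)

lemma rep1_ctx: "rep1 k u t t' \<Longrightarrow> \<exists>W. t = plug W (Var (k + depth W)) \<and> t' = plug W (lift (Suc (k + depth W)) 0 u)"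
proof (induction rule: rep1.induct)
  case (r_var k u)
  then show ?case by (intro exI[of _ Hole]) simp
next
  case (r_appL k u a a' b)
  then obtain W where "a = plug W (Var (k + depth W)) \<and> a' = plug W (lift (Suc (k + depth W)) 0 u)" by blast
  then show ?case by (intro exI[of _ "AppL W b"]) simp
next
  case (r_appR k u b b' a)
  then obtain W where "b = plug W (Var (k + depth W)) \<and> b' = plug W (lift (Suc (k + depth W)) 0 u)" by blast
  then show ?case by (intro exI[of _ "AppR a W"]) simp
next
  case (r_subL k u a a' b)
  then obtain W where "a = plug W (Var (Suc k + depth W)) \<and> a' = plug W (lift (Suc (Suc k + depth W)) 0 u)" by blast
  then show ?case by (intro exI[of _ "SubL W b"]) simp
next
  case (r_subR k u b b' a)
  then obtain W where "b = plug W (Var (k + depth W)) \<and> b' = plug W (lift (Suc (k + depth W)) 0 u)" by blast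
  then show ?case by (intro exI[of _ "SubR a W"]) simp
qed

lemma root_e_iff: "root_e a b \<longleftrightarrow> (\<exists>t t' u. a = Sub t u \<and> b = Sub t' u \<and> rep1 0 u t t')"
proof
  assume "root_e a b"
  then show "\<exists>t t' u. a = Sub t u \<and> b = Sub t' u \<and> rep1 0 u t t'"
    by (cases rule: root_e.cases) (use rep1_plug[of 0] in auto)
next
  assume "\<exists>t t' u. a = Sub t u \<and> b = Sub t' u \<and> rep1 0 u t t'"
  then obtain t t' u where "a = Sub t u" "b = Sub t' u" "rep1 0 u t t'" by blast
  moreover obtain W where "t = plug W (Var (depth W))" "t' = plug W (lift (Suc (depth W)) 0 u)"
    using rep1_ctx[OF \<open>rep1 0 u t t'\<close>] by auto
  ultimately show "root_e a b" by (simp add: root_e.intros)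
qed

lemma red_plug: "red g t s \<Longrightarrow> red g (plug W t) (plug W s)"
  by (induction W) (auto intro: red.intros)

lemma wclos_appL: "wclos R a b \<Longrightarrow> wclos R (App a c) (App b c)"
  by (induction rule: wclos.induct) (metis plug.simps(2) wclos.intros)
lemma wclos_appR: "wclos R a b \<Longrightarrow> wclos R (App c a) (App c b)"
  by (induction rule: wclos.induct) (metis plug.simps(3) wclos.intros)
lemma wclos_subL: "wclos R a b \<Longrightarrow> wclos R (Sub a c) (Sub b c)"
  by (induction rule: wclos.induct) (metis plug.simps(4) wclos.intros)
lemma wclos_subR: "wclos R a b \<Longrightarrow> wclos R (Sub c a) (Sub c b)"
  by (induction rule: wclos.induct) (metis plug.simps(5) wclos.intros)
lemma wclos_root: "R a b \<Longrightarrow> wclos R a b"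
  using wclos.intros[of R a b Hole] by simp

lemma red_iff: "red g a b \<longleftrightarrow> step_wm a b \<or> step_we a b \<or> (g \<and> step_wgcv a b)"
proof
  assume "red g a b"
  then show "step_wm a b \<or> step_we a b \<or> (g \<and> step_wgcv a b)"
    unfolding step_wm_def step_we_def step_wgcv_def
  proof (induction rule: red.induct)
    case (rm t u)
    then show ?case by (auto intro!: wclos_root simp: root_m_iff)
  next
    case (re u t t')
    then show ?case by (auto intro!: wclos_root simp: root_e_iff)
  next
    case (rgc r t)
    then show ?case by (auto intro!: wclos_root simp: root_gcv_iff)
  qed (auto intro: wclos_appL wclos_appR wclos_subL wclos_subR)
next
  assume "step_wm a b \<or> step_we a b \<or> (g \<and> step_wgcv a b)"
  then show "red g a b"
    unfolding step_wm_def step_we_def step_wgcv_def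
  proof (elim disjE conjE)
    assume "wclos root_m a b"
    then show ?thesis by (induction rule: wclos.induct) (auto intro!: red_plug red.rm simp: root_m_iff)
  next
    assume "wclos root_e a b"
    then show ?thesis by (induction rule: wclos.induct) (auto intro!: red_plug red.re simp: root_e_iff)
  next
    assume g: "g" and w: "wclos root_gcv a b"
    from w show ?thesis by (induction rule: wclos.induct) (auto intro!: red_plug rgc' g simp: root_gcv_iff)
  qed
qed

lemma step_w_eq: "step_w = red True"
  by (intro ext) (simp add: step_w_def red_iff)

lemma step_w_nogcv_eq: "step_w_nogcv = red False"
  by (intro ext) (simp add: step_w_nogcv_def red_iff)

theorem theorem4p8:
  shows "confluent step_w \<and> confluent step_w_nogcv"
  by (simp add: step_w_eq step_w_nogcv_eq red_confluent)

end
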